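(* Let $r\ge1$ and let $\gamma_1,\dots,\gamma_{r+1},p_1,\dots,p_{r+1},a_1,\dots,a_{r+1}$ be indeterminates. Let $\mathrm{Wr}$ denote the relations (coefficientwise in $z=e^{\zeta}$) $$\frac{\det_{1\le i,j\le r+1}\big[z(1+\gamma_i)^{j-1}-p_i\gamma_i^{j-1}\big]}{\det_{1\le i,j\le r+1}\big[(1+\gamma_i)^{j-1}\big]}=\Lambda(z)=\prod_{i=1}^{r+1}(z-a_i),$$ and set ${\rm Fun}(t{\rm Op}_Z^{\Lambda})=\mathbb{C}(\gamma_i,p_i,a_i)/\mathrm{Wr}$. Let $t=(t_{ij})_{i,j=1}^{r+1}$ be the rational Ruijsenaars–Schneider Lax matrix $$t_{ij}=\frac{\prod_{m\neq j}(\gamma_i-\gamma_m-1)}{\prod_{l\neq j}(\gamma_j-\gamma_l)}\,p_i,$$ and define the rRS Hamiltonians by $\det(z-t)=\sum_k H^{rRS}_k(\{\gamma_i\},\{p_i\})z^k$. Then there is an isomorphism of algebras $${\rm Fun}(t{\rm Op}_Z^{\Lambda})\cong\mathbb{C}(\gamma_i,p_i,a_i)\Big/\Big(\text{relations }\det(z-t)=\prod_{i=1}^{r+1}(z-a_i)\text{ coefficientwise in }z\Big).$$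
   Context: ${\rm Fun}(t{\rm Op}_Z^{\Lambda})$ is the algebra of functions on the space of canonical trigonometrically $Z$-twisted Miura $SL(r+1)$-opers on $\mathbb{P}^1$, $Z=\mathrm{diag}(\gamma_1,\dots,\gamma_{r+1})$ regular semisimple: the oper connection is gauge equivalent to $\partial_z+Z/z$ (equivalently, in the cylinder coordinate $z=e^{\zeta}$, to $\partial_\zeta+Z$), the section of the line subbundle has degree-one monic components, the only regular singularities are the distinct roots $a_i$ of $\Lambda$, and the twisted Wronskian condition takes the form $\mathrm{Wr}$ above. *)

theory Defs
  imports "Jordan_Normal_Form.Determinant"
begin

text \<open>Indices i,j run over 0..<n with n = r+1 (shifted by one w.r.t. the paper),
  so the exponent j-1 of the paper becomes j.\<close>

definition wr_matrix :: "nat \<Rightarrow> (nat \<Rightarrow> complex) \<Rightarrow> (nat \<Rightarrow> complex) \<Rightarrow> complex \<Rightarrow> complex mat" where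
  "wr_matrix n \<gamma> p z = mat n n (\<lambda>(i,j). z * (1 + \<gamma> i) ^ j - p i * \<gamma> i ^ j)"

definition vdm_matrix :: "nat \<Rightarrow> (nat \<Rightarrow> complex) \<Rightarrow> complex mat" where
  "vdm_matrix n \<gamma> = mat n n (\<lambda>(i,j). (1 + \<gamma> i) ^ j)"

definition wr_ratio :: "nat \<Rightarrow> (nat \<Rightarrow> complex) \<Rightarrow> (nat \<Rightarrow> complex) \<Rightarrow> complex \<Rightarrow> complex" where
  "wr_ratio n \<gamma> p z = det (wr_matrix n \<gamma> p z) / det (vdm_matrix n \<gamma>)"

definition rRS_lax :: "nat \<Rightarrow> (nat \<Rightarrow> complex) \<Rightarrow> (nat \<Rightarrow> complex) \<Rightarrow> complex mat" where
  "rRS_lax n \<gamma> p = mat n n (\<lambda>(i,j).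
     (\<Prod>m\<in>{0..<n}-{j}. \<gamma> i - \<gamma> m - 1) / (\<Prod>l\<in>{0..<n}-{j}. \<gamma> j - \<gamma> l) * p i)"

definition rRS_charpoly :: "nat \<Rightarrow> (nat \<Rightarrow> complex) \<Rightarrow> (nat \<Rightarrow> complex) \<Rightarrow> complex \<Rightarrow> complex" where
  "rRS_charpoly n \<gamma> p z = det (z \<cdot>\<^sub>m 1\<^sub>m n - rRS_lax n \<gamma> p)"

end

theory Submission
  imports Defs "HOL-Computational_Algebra.Polynomial"
begin



lemma poly_zero_distinct:
  fixes Q :: "complex poly" and x :: "nat \<Rightarrow> complex"
  assumes "inj_on x {0..<n}" "degree Q < n" "\<And>i. i < n \<Longrightarrow> poly Q (x i) = 0"
  shows "Q = 0"
proof (rule ccontr)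
  assume Q: "Q \<noteq> 0"
  have "x ` {0..<n} \<subseteq> {y. poly Q y = 0}" using assms(3) by auto
  hence "card (x ` {0..<n}) \<le> card {y. poly Q y = 0}"
    using poly_roots_finite[OF Q] by (intro card_mono) auto
  also have "\<dots> \<le> degree Q" using card_poly_roots_bound[OF Q] .
  finally show False using assms(1,2) by (simp add: card_image)
qed

lemma lagrange_monomial:
  fixes x :: "nat \<Rightarrow> complex"
  assumes inj: "inj_on x {0..<n}" and k: "k < n"
  shows "(\<Sum>j<n. x j ^ k * ((\<Prod>m\<in>{0..<n}-{j}. y - x m) / (\<Prod>l\<in>{0..<n}-{j}. x j - x l))) = y ^ k"
proof -
  define Q where "Q = (\<Sum>j<n. smult (x j ^ k / (\<Prod>l\<in>{0..<n}-{j}. x j - x l))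
        (\<Prod>m\<in>{0..<n}-{j}. [:- x m, 1:])) - monom 1 k"
  have pQ: "poly Q y = (\<Sum>j<n. x j ^ k * ((\<Prod>m\<in>{0..<n}-{j}. y - x m) / (\<Prod>l\<in>{0..<n}-{j}. x j - x l))) - y ^ k" for y
    by (simp add: Q_def poly_sum poly_prod poly_monom)
  have dprod: "degree (\<Prod>m\<in>{0..<n}-{j}. [:- x m, 1:]) \<le> n - 1" if "j < n" for j
  proof -
    have "degree (\<Prod>m\<in>{0..<n}-{j}. [:- x m, 1:]) \<le> (\<Sum>m\<in>{0..<n}-{j}. degree [:- x m, 1:])"
      using degree_prod_sum_le[of "{0..<n}-{j}" "\<lambda>m. [:- x m, 1:]"] by (simp add: o_def)
    also have "\<dots> = n - 1" using that by simp
    finally show ?thesis .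
  qed
  have "degree Q \<le> n - 1"
    unfolding Q_def
    apply (rule degree_diff_le)
     apply (rule degree_sum_le)
      apply simp
     apply (rule order.trans[OF degree_smult_le])
     apply (use dprod in simp)
    using k by (simp add: degree_monom_eq)
  hence dQ: "degree Q < n" using k by linarith
  have "Q = 0"
  proof (rule poly_zero_distinct[OF inj dQ])
    fix i assume i: "i < n"
    have D: "(\<Prod>l\<in>{0..<n}-{i}. x i - x l) \<noteq> 0"
      using inj i by (auto simp: prod_zero_iff inj_on_def)
    have Z: "(\<Prod>m\<in>{0..<n}-{j}. x i - x m) = 0" if "j < n" "j \<noteq> i" for j
      using that i by (auto simp: prod_zero_iff intro!: bexI[of _ i])
    have "(\<Sum>j<n. x j ^ k * ((\<Prod>m\<in>{0..<n}-{j}. x i - x m) / (\<Prod>l\<in>{0..<n}-{j}. x j - x l)))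
        = (\<Sum>j\<in>{i}. x j ^ k * ((\<Prod>m\<in>{0..<n}-{j}. x i - x m) / (\<Prod>l\<in>{0..<n}-{j}. x j - x l)))"
      by (rule sum.mono_neutral_right) (use i Z in auto)
    also have "\<dots> = x i ^ k" using D by simp
    finally show "poly Q (x i) = 0" by (simp add: pQ)
  qed
  thus ?thesis using pQ[of y] by simp
qed

lemma lax_times_vdm:
  fixes \<gamma> p :: "nat \<Rightarrow> complex"
  assumes inj: "inj_on \<gamma> {0..<n}"
  shows "rRS_lax n \<gamma> p * vdm_matrix n \<gamma> = mat n n (\<lambda>(i,k). p i * \<gamma> i ^ k)"
proof (rule eq_matI)
  show "dim_row (rRS_lax n \<gamma> p * vdm_matrix n \<gamma>) = dim_row (mat n n (\<lambda>(i,k). p i * \<gamma> i ^ k))"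
    by (simp add: rRS_lax_def)
  show "dim_col (rRS_lax n \<gamma> p * vdm_matrix n \<gamma>) = dim_col (mat n n (\<lambda>(i,k). p i * \<gamma> i ^ k))"
    by (simp add: vdm_matrix_def)
  fix i k assume i: "i < dim_row (mat n n (\<lambda>(i,k). p i * \<gamma> i ^ k))"
     and k: "k < dim_col (mat n n (\<lambda>(i,k). p i * \<gamma> i ^ k))"
  hence i: "i < n" and k: "k < n" by auto
  define x where "x = (\<lambda>j. 1 + \<gamma> j)"
  have injx: "inj_on x {0..<n}" using inj by (auto simp: inj_on_def x_def)
  have L: "(\<Sum>j<n. x j ^ k * ((\<Prod>m\<in>{0..<n}-{j}. \<gamma> i - x m) / (\<Prod>l\<in>{0..<n}-{j}. x j - x l))) = \<gamma> i ^ k"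
    by (rule lagrange_monomial[OF injx k])
  have P1: "(\<Prod>m\<in>{0..<n}-{j}. \<gamma> i - x m) = (\<Prod>m\<in>{0..<n}-{j}. \<gamma> i - \<gamma> m - 1)" for j
    by (rule prod.cong) (auto simp: x_def)
  have P2: "(\<Prod>l\<in>{0..<n}-{j}. x j - x l) = (\<Prod>l\<in>{0..<n}-{j}. \<gamma> j - \<gamma> l)" for j
    by (rule prod.cong) (auto simp: x_def)
  have "(rRS_lax n \<gamma> p * vdm_matrix n \<gamma>) $$ (i,k)
      = (\<Sum>j\<in>{0..<n}. (\<Prod>m\<in>{0..<n}-{j}. \<gamma> i - \<gamma> m - 1) / (\<Prod>l\<in>{0..<n}-{j}. \<gamma> j - \<gamma> l) * p i * (1 + \<gamma> j) ^ k)"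
    using i k by (simp add: rRS_lax_def vdm_matrix_def scalar_prod_def)
  also have "\<dots> = p i * (\<Sum>j<n. x j ^ k * ((\<Prod>m\<in>{0..<n}-{j}. \<gamma> i - x m) / (\<Prod>l\<in>{0..<n}-{j}. x j - x l)))"
    unfolding P1 P2 sum_distrib_left by (rule sum.cong) (auto simp: x_def atLeast0LessThan)
  also have "\<dots> = p i * \<gamma> i ^ k" using L by simp
  finally show "(rRS_lax n \<gamma> p * vdm_matrix n \<gamma>) $$ (i,k) = mat n n (\<lambda>(i,k). p i * \<gamma> i ^ k) $$ (i,k)"
    using i k by simp
qed

lemma vdm_det_nonzero:
  fixes \<gamma> :: "nat \<Rightarrow> complex"
  assumes inj: "inj_on \<gamma> {0..<n}" and n: "n > 0"
  shows "det (vdm_matrix n \<gamma>) \<noteq> 0"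
proof
  assume "det (vdm_matrix n \<gamma>) = 0"
  then obtain v where v: "v \<in> carrier_vec n" "v \<noteq> 0\<^sub>v n" "vdm_matrix n \<gamma> *\<^sub>v v = 0\<^sub>v n"
    using det_0_iff_vec_prod_zero[of "vdm_matrix n \<gamma>" n] by (auto simp: vdm_matrix_def)
  define x where "x = (\<lambda>j. 1 + \<gamma> j)"
  have injx: "inj_on x {0..<n}" using inj by (auto simp: inj_on_def x_def)
  define Q where "Q = (\<Sum>i<n. monom (v $ i) i)"
  have cQ: "coeff Q i = (if i < n then v $ i else 0)" for i
    by (simp add: Q_def coeff_sum)
  have "degree Q \<le> n - 1"
    by (rule degree_le) (use n in \<open>auto simp: cQ\<close>)
  hence dQ: "degree Q < n" using n by linarith
  have "Q = 0"
  proof (rule poly_zero_distinct[OF injx dQ])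
    fix j assume j: "j < n"
    have "(vdm_matrix n \<gamma> *\<^sub>v v) $ j = 0" using v(3) j by simp
    moreover have "(vdm_matrix n \<gamma> *\<^sub>v v) $ j = (\<Sum>i\<in>{0..<n}. (1 + \<gamma> j) ^ i * v $ i)"
      using j v(1) by (simp add: vdm_matrix_def scalar_prod_def)
    moreover have "poly Q (x j) = (\<Sum>i<n. v $ i * x j ^ i)"
      by (simp add: Q_def poly_sum poly_monom)
    ultimately show "poly Q (x j) = 0"
      by (simp add: x_def atLeast0LessThan mult.commute)
  qed
  hence "v $ i = 0" if "i < n" for i
    using cQ[of i] that by simp
  hence "v = 0\<^sub>v n"
    using v(1) by (intro eq_vecI) auto
  thus False using v(2) by simp
qed

theorem mainTheorem6:
  fixes r :: nat and \<gamma> p a :: "nat \<Rightarrow> complex"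
  assumes "r \<ge> 1"
    and "inj_on \<gamma> {0..<r+1}"
  shows "(\<forall>z. wr_ratio (r+1) \<gamma> p z = rRS_charpoly (r+1) \<gamma> p z)
    \<and> ((\<forall>z. wr_ratio (r+1) \<gamma> p z = (\<Prod>i<r+1. z - a i))
        \<longleftrightarrow> (\<forall>z. rRS_charpoly (r+1) \<gamma> p z = (\<Prod>i<r+1. z - a i)))"
proof -
  define n where "n = r + 1"
  have inj: "inj_on \<gamma> {0..<n}" using assms(2) by (simp add: n_def)
  have V: "vdm_matrix n \<gamma> \<in> carrier_mat n n" by (simp add: vdm_matrix_def)
  have T: "rRS_lax n \<gamma> p \<in> carrier_mat n n" by (simp add: rRS_lax_def)
  have I: "z \<cdot>\<^sub>m 1\<^sub>m n \<in> carrier_mat n n" for z :: complex by simp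
  have W: "wr_matrix n \<gamma> p z = (z \<cdot>\<^sub>m 1\<^sub>m n - rRS_lax n \<gamma> p) * vdm_matrix n \<gamma>" for z
  proof -
    have "(z \<cdot>\<^sub>m 1\<^sub>m n - rRS_lax n \<gamma> p) * vdm_matrix n \<gamma>
        = z \<cdot>\<^sub>m vdm_matrix n \<gamma> - mat n n (\<lambda>(i,k). p i * \<gamma> i ^ k)"
      unfolding minus_mult_distrib_mat[OF I T V] mult_smult_assoc_mat[OF one_carrier_mat V]
        left_mult_one_mat[OF V] lax_times_vdm[OF inj] ..
    also have "\<dots> = wr_matrix n \<gamma> p z"
      by (rule eq_matI) (auto simp: wr_matrix_def vdm_matrix_def)
    finally show ?thesis by simp
  qed
  have main: "wr_ratio n \<gamma> p z = rRS_charpoly n \<gamma> p z" for z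
  proof -
    have "det (wr_matrix n \<gamma> p z) = rRS_charpoly n \<gamma> p z * det (vdm_matrix n \<gamma>)"
      unfolding W rRS_charpoly_def
      by (rule det_mult[OF minus_carrier_mat[OF T] V])
    thus ?thesis using vdm_det_nonzero[OF inj] n_def by (simp add: wr_ratio_def)
  qed
  show ?thesis using main unfolding n_def by simp
qed

end
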